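(* Let $d\geq 2$ be even and $E,F\subset\mathbb F_q^d$ with $|E||F|\geq 16q^d$. Then $$(|E||F|-\nu(0))^2\geq \frac{|E|^2|F|^2}{36}$$ and $$q^{3d}\Big|\sum_{m\in S_0}\overline{\widehat E(m)}\widehat F(m)\Big|^2-\nu^2(0)\leq q^{-1}|E|^2|F|^2.$$
   Context: $\mathbb F_q$ is a finite field of characteristic greater than two, and $\chi$ is a fixed nontrivial additive character of $\mathbb F_q$. For $f:\mathbb F_q^d\to\mathbb C$, $\widehat f(m)=q^{-d}\sum_{x\in\mathbb F_q^d}\chi(-m\cdot x)f(x)$; sets are identified with their indicator functions. For $m\in\mathbb F_q^d$, $\|m\|=m_1^2+\dots+m_d^2$; $S_0=\{x\in\mathbb F_q^d:\|x\|=0\}$. $\nu(0)=|\{(x,y)\in E\times F:\|x-y\|=0\}|$. *)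

theory Defs
  imports "HOL-Analysis.Analysis"
begin

text \<open>Dot product on F_q^d, vectors indexed by a finite type 'n (d = CARD('n)).\<close>
definition vdot :: "'a::comm_ring_1 ^ 'n \<Rightarrow> 'a ^ 'n \<Rightarrow> 'a" where
  "vdot m x = (\<Sum>i\<in>UNIV. m $ i * x $ i)"

text \<open>Quadratic form \<open>\<parallel>m\<parallel> = m_1^2 + ... + m_d^2\<close> (not a norm).\<close>
definition qnorm :: "'a::comm_ring_1 ^ 'n \<Rightarrow> 'a" where
  "qnorm m = (\<Sum>i\<in>UNIV. (m $ i)^2)"

definition nontriv_add_char :: "('a::{finite,field} \<Rightarrow> complex) \<Rightarrow> bool" where
  "nontriv_add_char psi \<longleftrightarrow> (\<forall>x y. psi (x + y) = psi x * psi y) \<and> (\<exists>x. psi x \<noteq> 1)"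

definition fourier :: "('a::{finite,field} \<Rightarrow> complex) \<Rightarrow> ('a ^ 'n \<Rightarrow> complex) \<Rightarrow> 'a ^ 'n \<Rightarrow> complex" where
  "fourier psi f m = (1 / of_nat (CARD('a) ^ CARD('n))) * (\<Sum>x\<in>UNIV. psi (- vdot m x) * f x)"

definition ind :: "'b set \<Rightarrow> 'b \<Rightarrow> complex" where
  "ind A x = (if x \<in> A then 1 else 0)"

definition S0 :: "('a::{finite,field} ^ 'n) set" where
  "S0 = {x. qnorm x = 0}"

definition nu0 :: "('a::{finite,field} ^ 'n) set \<Rightarrow> ('a ^ 'n) set \<Rightarrow> nat" where
  "nu0 E F = card {(x, y). x \<in> E \<and> y \<in> F \<and> qnorm (x - y) = 0}"

end

theory Submission imports Defs "HOL-Computational_Algebra.Primes" begin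
lemma vdot_add_right: "vdot m (x + y) = vdot m x + vdot m y"
  by (simp add: vdot_def distrib_left sum.distrib)
lemma vdot_diff_right: "vdot m (x - y) = vdot m x - vdot m (y::'a::comm_ring_1^'n)"
  by (simp add: vdot_def right_diff_distrib sum_subtractf)
lemma vdot_commute: "vdot m x = vdot x m"
  by (simp add: vdot_def mult.commute)
lemma vdot_scale_left: "vdot (\<chi> i. c * m $ i) x = c * vdot m x"
  by (simp add: vdot_def sum_distrib_left mult.assoc)
lemma qnorm_add: "qnorm (x + y) = qnorm x + 2 * vdot x y + qnorm (y::'a::comm_ring_1^'n)"
  by (simp add: qnorm_def vdot_def power2_eq_square algebra_simps sum.distrib sum_distrib_left)
lemma qnorm_scale: "qnorm (\<chi> i. c * m $ i) = c^2 * qnorm m"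
  by (simp add: qnorm_def sum_distrib_left power_mult_distrib)

definition goodc :: "('a::{finite,field} \<Rightarrow> complex) \<Rightarrow> bool" where
  "goodc psi \<longleftrightarrow> (\<forall>x y. psi (x + y) = psi x * psi y) \<and> psi 0 = 1 \<and> (\<exists>x. psi x \<noteq> 1)"

lemma goodc_add: "goodc psi \<Longrightarrow> psi (x + y) = psi x * psi y"
  by (simp add: goodc_def)
lemma goodc_0: "goodc psi \<Longrightarrow> psi 0 = 1"
  by (simp add: goodc_def)
lemma goodc_neg: "goodc psi \<Longrightarrow> psi (- x) * psi x = 1"
  by (metis goodc_add goodc_0 add.right_inverse mult.commute)
lemma goodc_diff: "goodc psi \<Longrightarrow> psi (x - y) = psi x * psi (- y)"
  by (metis goodc_add diff_conv_add_uminus)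

lemma goodc_pow: "goodc psi \<Longrightarrow> psi (of_nat n * x) = psi x ^ n"
  by (induction n) (auto simp: goodc_0 goodc_add distrib_right)

lemma goodc_norm: assumes "goodc (psi :: 'a::{finite,field} \<Rightarrow> complex)" shows "cmod (psi x) = 1"
proof -
  have p: "CHAR('a) > 0" by (rule finite_imp_CHAR_pos) simp
  have "psi x ^ CHAR('a) = 1" using goodc_pow[OF assms, of "CHAR('a)" x] goodc_0[OF assms] by simp
  hence "cmod (psi x) ^ CHAR('a) = 1" by (metis norm_one norm_power)
  thus ?thesis using p power_eq_imp_eq_base[of "cmod (psi x)" _ 1] by simp
qed

lemma goodc_cnj: assumes "goodc (psi :: 'a::{finite,field} \<Rightarrow> complex)" shows "cnj (psi x) = psi (- x)"
proof -
  have "cnj (psi x) * psi x = 1" using goodc_norm[OF assms, of x]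
    by (metis complex_norm_square mult.commute of_real_1 power_one)
  moreover have "psi (- x) * psi x = 1" by (rule goodc_neg[OF assms])
  moreover have "psi x \<noteq> 0" using goodc_norm[OF assms, of x] by auto
  ultimately show ?thesis by (metis mult_right_cancel)
qed

lemma goodc_sum_vec:
  fixes psi :: "'a::{finite,field} \<Rightarrow> complex"
  assumes g: "goodc psi"
  shows "(\<Sum>x\<in>UNIV. psi (vdot (a::'a^'n) x)) = (if a = 0 then of_nat CARD('a^'n) else 0)"
proof (cases "a = 0")
  case True thus ?thesis by (simp add: vdot_def goodc_0[OF g])
next
  case False
  then obtain i where ai: "a $ i \<noteq> 0" by (metis vec_eq_iff zero_index)
  obtain t0 where t0: "psi t0 \<noteq> 1" using g by (auto simp: goodc_def)
  define y :: "'a^'n" where "y = (\<chi> j. if j = i then t0 / a $ i else 0)"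
  have vy: "vdot a y = t0" using ai
    by (simp add: vdot_def y_def if_distrib cong: if_cong)
  let ?S = "(\<Sum>x\<in>UNIV. psi (vdot a x))"
  have "?S = (\<Sum>x\<in>UNIV. psi (vdot a (x + y)))"
    by (rule sum.reindex_bij_witness[of _ "\<lambda>x. x + y" "\<lambda>x. x - y"]) auto
  also have "\<dots> = psi t0 * ?S"
    by (simp add: vdot_add_right goodc_add[OF g] vy sum_distrib_left mult.commute)
  finally have "(1 - psi t0) * ?S = 0" by (simp add: algebra_simps)
  thus ?thesis using t0 False by simp
qed

lemma goodc_sum_1:
  fixes psi :: "'a::{finite,field} \<Rightarrow> complex"
  assumes g: "goodc psi"
  shows "(\<Sum>s\<in>UNIV. psi (s * c)) = (if c = 0 then of_nat CARD('a) else 0)"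
proof (cases "c = 0")
  case True thus ?thesis by (simp add: goodc_0[OF g])
next
  case False
  obtain t0 where t0: "psi t0 \<noteq> 1" using g by (auto simp: goodc_def)
  let ?S = "(\<Sum>s\<in>UNIV. psi (s * c))"
  have "?S = (\<Sum>s\<in>UNIV. psi ((s + t0 / c) * c))"
    by (rule sum.reindex_bij_witness[of _ "\<lambda>x. x + t0 / c" "\<lambda>x. x - t0 / c"]) auto
  also have "\<dots> = (\<Sum>s\<in>UNIV. psi t0 * psi (s * c))"
  proof (intro sum.cong refl)
    fix s have "(s + t0 / c) * c = t0 + s * c" using False by (simp add: field_simps)
    thus "psi ((s + t0 / c) * c) = psi t0 * psi (s * c)" by (simp add: goodc_add[OF g])
  qed
  also have "\<dots> = psi t0 * ?S" by (simp add: sum_distrib_left)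
  finally have "(1 - psi t0) * ?S = 0" by (simp add: algebra_simps)
  thus ?thesis using t0 False by simp
qed

lemma two_ne_zero_char: "CHAR('a::field) > 2 \<Longrightarrow> (2::'a) \<noteq> 0"
proof
  assume c: "CHAR('a) > 2" and z: "(2::'a) = 0"
  have "of_nat 2 = (0::'a)" using z by simp
  hence "CHAR('a) dvd 2" by (simp only: of_nat_eq_0_iff_char_dvd)
  thus False using c by (auto dest: dvd_imp_le)
qed

lemma sq_fiber:
  fixes r :: "'a::field"
  shows "{t. t^2 = r^2} \<subseteq> {r, -r}"
proof
  fix t assume "t \<in> {t. t^2 = r^2}"
  hence "(t - r) * (t + r) = 0" by (simp add: algebra_simps power2_eq_square)
  thus "t \<in> {r, -r}" by (auto simp: add_eq_0_iff)
qed

lemma card_squares: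
  assumes c: "CHAR('a::{finite,field}) > 2"
  shows "CARD('a) + 1 \<le> 2 * card ((\<lambda>t::'a. t^2) ` UNIV)"
proof -
  let ?Q = "(\<lambda>t::'a. t^2) ` UNIV"
  have "UNIV = (\<Union>u\<in>?Q. {t. t^2 = u})" by auto
  hence "CARD('a) \<le> (\<Sum>u\<in>?Q. card {t::'a. t^2 = u})" by (metis card_UN_le finite)
  also have "\<dots> = card {t::'a. t^2 = 0} + (\<Sum>u\<in>?Q - {0}. card {t::'a. t^2 = u})"
    by (subst sum.remove[of _ 0]) auto
  also have "\<dots> \<le> 1 + (\<Sum>u\<in>?Q - {0}. 2)"
  proof (intro add_mono sum_mono)
    show "card {t::'a. t^2 = 0} \<le> 1" by simp
    fix u assume "u \<in> ?Q - {0}"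
    then obtain r where "u = r^2" by auto
    hence "card {t. t^2 = u} \<le> card {r, -r}" using sq_fiber[of r] by (intro card_mono) auto
    also have "\<dots> \<le> 2" by (simp add: card_insert_if)
    finally show "card {t. t^2 = u} \<le> 2" .
  qed
  also have "\<dots> = 1 + 2 * (card ?Q - 1)" by simp
  finally show ?thesis by (cases "card ?Q") auto
qed

lemma two_squares:
  assumes c: "CHAR('a::{finite,field}) > 2"
  shows "\<exists>a b::'a. a^2 + b^2 = s"
proof (rule ccontr)
  assume n: "\<not> ?thesis"
  let ?Q = "(\<lambda>t::'a. t^2) ` UNIV"
  let ?B = "(\<lambda>u. s - u) ` ?Q"
  have "?Q \<inter> ?B = {}" using n by (auto simp: algebra_simps)
  hence "card ?Q + card ?B \<le> CARD('a)" by (metis card_Un_disjoint finite card_mono subset_UNIV)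
  moreover have "card ?B = card ?Q" by (rule card_image) (auto simp: inj_on_def)
  ultimately show False using card_squares[OF c] by simp
qed

lemma sum_even_odd: "(\<Sum>j<2*(n::nat). g j) = (\<Sum>l<n. g (2*l) + g (2*l+1))"
  by (induction n) (auto simp: sum.distrib add_ac)

lemma qnorm_scale_invariance:
  fixes f :: "'a::{finite,field} \<Rightarrow> 'c::comm_monoid_add"
  assumes c: "CHAR('a) > 2" and ev: "even CARD('n)" and s: "s \<noteq> 0"
  shows "(\<Sum>x\<in>(UNIV::('a^'n) set). f (s * qnorm x)) = (\<Sum>x\<in>(UNIV::('a^'n) set). f (qnorm x))"
proof -
  obtain a b :: 'a where ab: "a^2 + b^2 = s" using two_squares[OF c] by blast
  obtain h where h: "bij_betw h {0..<CARD('n)} (UNIV::'n set)"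
    using ex_bij_betw_nat_finite[of "UNIV::'n set"] by auto
  define k where "k = inv_into {0..<CARD('n)} h"
  obtain n2 where n2: "CARD('n) = 2 * n2" using ev by blast
  have hk: "h (k i) = i" for i using h by (simp add: k_def bij_betw_inv_into_right)
  have kh: "j < CARD('n) \<Longrightarrow> k (h j) = j" for j using h
    by (simp add: k_def bij_betw_inv_into_left)
  have kl: "k i < CARD('n)" for i using h
    by (metis atLeastLessThan_iff bij_betw_def inv_into_into k_def UNIV_I)
  define pt where "pt i = h (if even (k i) then k i + 1 else k i - 1)" for i
  define M :: "'a^'n \<Rightarrow> 'a^'n" where
    "M x = (\<chi> i. if even (k i) then a * x $ i - b * x $ pt i else b * x $ pt i + a * x $ i)" for x
  have sumh: "(\<Sum>i\<in>UNIV. g i) = (\<Sum>j<2*n2. g (h j))" for g :: "'n \<Rightarrow> 'a"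
    using sum.reindex_bij_betw[OF h, of g] n2 by (simp add: atLeast0LessThan)
  have Mev: "M x $ h (2*l) = a * x $ h (2*l) - b * x $ h (2*l+1)" if "l < n2" for x l
    using that n2 kh[of "2*l"] by (simp add: M_def pt_def)
  have Mod: "M x $ h (2*l+1) = b * x $ h (2*l) + a * x $ h (2*l+1)" if "l < n2" for x l
    using that n2 kh[of "2*l+1"] by (simp add: M_def pt_def)
  have qM: "qnorm (M x) = s * qnorm x" for x
  proof -
    have "qnorm (M x) = (\<Sum>l<n2. (M x $ h (2*l))^2 + (M x $ h (2*l+1))^2)"
      unfolding qnorm_def sumh sum_even_odd ..
    also have "\<dots> = (\<Sum>l<n2. s * ((x $ h (2*l))^2 + (x $ h (2*l+1))^2))"
    proof (intro sum.cong refl)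
      fix l assume "l \<in> {..<n2}" hence l: "l < n2" by simp
      show "(M x $ h (2*l))^2 + (M x $ h (2*l+1))^2 = s * ((x $ h (2*l))^2 + (x $ h (2*l+1))^2)"
        unfolding Mev[OF l] Mod[OF l] ab[symmetric] by algebra
    qed
    also have "\<dots> = s * qnorm x"
      unfolding qnorm_def sumh sum_even_odd by (simp add: sum_distrib_left)
    finally show ?thesis .
  qed
  have injM: "inj M"
  proof (rule injI)
    fix x y assume e: "M x = M y"
    show "x = y"
    proof (rule iffD2[OF vec_eq_iff], intro allI)
      fix i
      obtain l where l: "l < n2" "i = h (2*l) \<or> i = h (2*l+1)"
      proof
        show "k i div 2 < n2" using kl[of i] n2 by simp
        show "i = h (2*(k i div 2)) \<or> i = h (2*(k i div 2)+1)"
          using hk[of i] by (metis dvd_mult_div_cancel odd_two_times_div_two_succ)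
      qed
      let ?u = "x $ h (2*l) - y $ h (2*l)" and ?v = "x $ h (2*l+1) - y $ h (2*l+1)"
      have "a * x $ h (2*l) - b * x $ h (2*l+1) = a * y $ h (2*l) - b * y $ h (2*l+1)"
        using Mev[OF l(1), of x] Mev[OF l(1), of y] e by metis
      hence e1: "a * ?u - b * ?v = 0" by (simp add: algebra_simps)
      have "b * x $ h (2*l) + a * x $ h (2*l+1) = b * y $ h (2*l) + a * y $ h (2*l+1)"
        using Mod[OF l(1), of x] Mod[OF l(1), of y] e by metis
      hence e2: "b * ?u + a * ?v = 0" by (simp add: algebra_simps)
      have "s * ?u = a * (a * ?u - b * ?v) + b * (b * ?u + a * ?v)"
        by (simp add: ab[symmetric] algebra_simps power2_eq_square)
      hence u: "?u = 0" using e1 e2 s by simp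
      have "s * ?v = a * (b * ?u + a * ?v) - b * (a * ?u - b * ?v)"
        by (simp add: ab[symmetric] algebra_simps power2_eq_square)
      hence v: "?v = 0" using e1 e2 s by simp
      show "x $ i = y $ i" using l(2) u v by auto
    qed
  qed
  hence bM: "bij M" using finite_UNIV_inj_surj[of M] by (simp add: bij_def)
  have "(\<Sum>x\<in>(UNIV::('a^'n) set). f (qnorm x)) = (\<Sum>x\<in>UNIV. f (qnorm (M x)))"
    using sum.reindex_bij_betw[OF bM, of "\<lambda>y. f (qnorm y)"] by simp
  thus ?thesis unfolding qM by (rule sym)
qed

lemma vdot_self: "vdot m m = qnorm m"
  by (simp add: vdot_def qnorm_def power2_eq_square)

lemma sum_nonzero_inv:
  fixes psi :: "'a::{finite,field} \<Rightarrow> complex"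
  assumes g: "goodc psi" and c: "CHAR('a) > 2"
  shows "(\<Sum>s\<in>UNIV - {0}. psi (- (Q / (4 * s)))) = (if Q = 0 then of_nat CARD('a) - 1 else - 1)"
proof (cases "Q = 0")
  case True
  thus ?thesis by (simp add: goodc_0[OF g] card_Diff_subset of_nat_diff)
next
  case False
  have "(4::'a) = 2 * 2" by simp
  hence four: "(4::'a) \<noteq> 0" using two_ne_zero_char[OF c] by (metis mult_eq_0_iff)
  have "(\<Sum>s\<in>UNIV - {0}. psi (- (Q / (4 * s)))) = (\<Sum>t\<in>UNIV - {0}. psi t)"
  proof (rule sum.reindex_bij_witness[of _ "\<lambda>t. - (Q / (4 * t))" "\<lambda>s. - (Q / (4 * s))"])
    fix a :: 'a assume a: "a \<in> UNIV - {0}"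
    show "- (Q / (4 * - (Q / (4 * a)))) = a" using a False four by (simp add: field_simps)
    show "- (Q / (4 * a)) \<in> UNIV - {0}" using a False four by simp
    show "- (Q / (4 * - (Q / (4 * a)))) = a" using a False four by (simp add: field_simps)
    show "- (Q / (4 * a)) \<in> UNIV - {0}" using a False four by simp
  qed simp
  also have "\<dots> = (\<Sum>t\<in>UNIV. psi t) - psi 0" by (simp add: sum_diff1)
  also have "(\<Sum>t\<in>UNIV. psi t) = 0" using goodc_sum_1[OF g, of 1] by simp
  finally show ?thesis using False by (simp add: goodc_0[OF g])
qed

lemma Phi_lemma:
  fixes psi :: "'a::{finite,field} \<Rightarrow> complex" and m :: "'a^'n"
  assumes g: "goodc psi" and c: "CHAR('a) > 2" and ev: "even CARD('n)" and s: "s \<noteq> 0"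
  shows "(\<Sum>w\<in>UNIV. psi (s * qnorm w - vdot m w))
         = (\<Sum>w\<in>(UNIV::('a^'n) set). psi (qnorm w)) * psi (- (qnorm m / (4 * s)))"
proof -
  have two: "(2::'a) \<noteq> 0" by (rule two_ne_zero_char[OF c])
  define v :: "'a^'n" where "v = (\<chi> i. (1 / (2 * s)) * m $ i)"
  have key: "s * qnorm (u + v) - vdot m (u + v) = s * qnorm u + (- (qnorm m / (4 * s)))" for u
  proof -
    define a where "a = 1 / (2 * s)"
    have ts: "2 * s \<noteq> 0" using two s by simp
    have h1: "vdot u v = a * vdot m u"
      unfolding v_def a_def vdot_commute[of u] by (rule vdot_scale_left)
    have h2: "qnorm v = a^2 * qnorm m" unfolding v_def a_def by (rule qnorm_scale)
    have h3: "vdot m v = a * qnorm m"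
      unfolding v_def a_def vdot_commute[of m] vdot_scale_left vdot_self ..
    have h4: "2 * a * s = 1" using ts by (simp add: a_def)
    have h5: "(4::'a) * s = 2 * (2 * s)" by simp
    have sa: "s * a = 1 / 2" using ts two by (simp add: a_def field_simps)
    have "s * a^2 - a = a * (s * a) - a" by (simp add: power2_eq_square algebra_simps)
    also have "\<dots> = - (a / 2)" unfolding sa using two by (simp add: field_simps)
    also have "a / 2 = 1 / (2 * (2 * s))" by (simp add: a_def)
    finally have h6: "s * a^2 - a = - (1 / (2 * (2 * s)))" .
    have "s * qnorm (u + v) - vdot m (u + v)
          = s * qnorm u + (2 * a * s - 1) * vdot m u + (s * a^2 - a) * qnorm m"
      by (simp add: qnorm_add vdot_add_right h1 h2 h3 algebra_simps)
    also have "\<dots> = s * qnorm u + (- (qnorm m / (4 * s)))"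
      unfolding h4 h6 h5 by simp
    finally show ?thesis .
  qed
  have "(\<Sum>w\<in>UNIV. psi (s * qnorm w - vdot m w)) = (\<Sum>u\<in>UNIV. psi (s * qnorm (u + v) - vdot m (u + v)))"
    by (rule sum.reindex_bij_witness[of _ "\<lambda>x. x + v" "\<lambda>x. x - v"]) auto
  also have "\<dots> = (\<Sum>u\<in>(UNIV::('a^'n) set). psi (s * qnorm u) * psi (- (qnorm m / (4 * s))))"
    by (simp only: key goodc_add[OF g])
  also have "\<dots> = (\<Sum>u\<in>(UNIV::('a^'n) set). psi (s * qnorm u)) * psi (- (qnorm m / (4 * s)))"
    by (simp add: sum_distrib_right)
  also have "(\<Sum>u\<in>(UNIV::('a^'n) set). psi (s * qnorm u)) = (\<Sum>w\<in>(UNIV::('a^'n) set). psi (qnorm w))"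
    by (rule qnorm_scale_invariance[OF c ev s])
  finally show ?thesis .
qed

lemma expand_lemma:
  fixes psi :: "'a::{finite,field} \<Rightarrow> complex" and z :: "'a^'n"
  assumes g: "goodc psi" and c: "CHAR('a) > 2" and ev: "even CARD('n)" and s: "s \<noteq> 0"
  shows "psi (s * qnorm z) = (\<Sum>w\<in>(UNIV::('a^'n) set). psi (qnorm w)) / of_nat CARD('a^'n) *
           (\<Sum>m\<in>UNIV. psi (vdot m z) * psi (- (qnorm m / (4 * s))))"
proof -
  let ?T = "(\<Sum>w\<in>(UNIV::('a^'n) set). psi (qnorm w))"
  let ?N = "of_nat CARD('a^'n) :: complex"
  have N0: "?N \<noteq> 0" by simp
  have "?T * (\<Sum>m\<in>UNIV. psi (vdot m z) * psi (- (qnorm m / (4 * s))))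
      = (\<Sum>m\<in>UNIV. psi (vdot m z) * (\<Sum>w\<in>UNIV. psi (s * qnorm w - vdot m w)))"
    by (simp add: Phi_lemma[OF g c ev s] sum_distrib_left mult_ac)
  also have "\<dots> = (\<Sum>m\<in>UNIV. \<Sum>w\<in>UNIV. psi (s * qnorm w) * psi (vdot (z - w) m))"
  proof (intro sum.cong refl)
    fix m :: "'a^'n"
    show "psi (vdot m z) * (\<Sum>w\<in>UNIV. psi (s * qnorm w - vdot m w)) =
          (\<Sum>w\<in>UNIV. psi (s * qnorm w) * psi (vdot (z - w) m))"
      unfolding sum_distrib_left
    proof (intro sum.cong refl)
      fix w :: "'a^'n"
      have "s * qnorm w - vdot m w + vdot m z = s * qnorm w + vdot (z - w) m"
        by (simp add: vdot_commute[of "z - w"] vdot_diff_right)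
      thus "psi (vdot m z) * psi (s * qnorm w - vdot m w) = psi (s * qnorm w) * psi (vdot (z - w) m)"
        by (metis goodc_add[OF g] mult.commute)
    qed
  qed
  also have "\<dots> = (\<Sum>w\<in>UNIV. psi (s * qnorm w) * (\<Sum>m\<in>UNIV. psi (vdot (z - w) m)))"
    by (subst sum.swap) (simp add: sum_distrib_left)
  also have "\<dots> = (\<Sum>w\<in>UNIV. if w = z then psi (s * qnorm z) * ?N else 0)"
    by (intro sum.cong refl) (simp add: goodc_sum_vec[OF g])
  also have "\<dots> = psi (s * qnorm z) * ?N" by simp
  finally show ?thesis using N0 by (simp add: field_simps)
qed

lemma nu0_sum: "nu0 E F = (\<Sum>x\<in>E. \<Sum>y\<in>F. if qnorm (x - y) = 0 then 1 else 0)"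
  if "finite E" "finite F" for E F :: "('a::{finite,field}^'n) set"
proof -
  have "{(x, y). x \<in> E \<and> y \<in> F \<and> qnorm (x - y) = 0} = {p \<in> E \<times> F. qnorm (fst p - snd p) = 0}"
    by auto
  hence "nu0 E F = card {p \<in> E \<times> F. qnorm (fst p - snd p) = 0}" by (simp add: nu0_def)
  also have "\<dots> = (\<Sum>p\<in>{p \<in> E \<times> F. qnorm (fst p - snd p) = 0}. 1)" by simp
  also have "\<dots> = (\<Sum>p\<in>E \<times> F. if qnorm (fst p - snd p) = 0 then 1 else 0)"
    using that by (subst sum.inter_filter) auto
  also have "\<dots> = (\<Sum>x\<in>E. \<Sum>y\<in>F. if qnorm (x - y) = 0 then 1 else 0)"
    by (simp add: sum.cartesian_product case_prod_unfold)
  finally show ?thesis .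
qed

lemma P_sum:
  fixes psi :: "'a::{finite,field} \<Rightarrow> complex" and E F :: "('a^'n) set"
  assumes g: "goodc psi"
  shows "(\<Sum>m\<in>UNIV. \<Sum>x\<in>E. \<Sum>y\<in>F. psi (vdot m (x - y))) = of_nat CARD('a^'n) * of_nat (card (E \<inter> F))"
proof -
  have "(\<Sum>m\<in>UNIV. \<Sum>x\<in>E. \<Sum>y\<in>F. psi (vdot m (x - y))) = (\<Sum>x\<in>E. \<Sum>m\<in>UNIV. \<Sum>y\<in>F. psi (vdot m (x - y)))"
    by (rule sum.swap)
  also have "\<dots> = (\<Sum>x\<in>E. \<Sum>y\<in>F. \<Sum>m\<in>UNIV. psi (vdot m (x - y)))"
    by (intro sum.cong refl sum.swap)
  also have "\<dots> = (\<Sum>x\<in>E. \<Sum>y\<in>F. \<Sum>m\<in>UNIV. psi (vdot (x - y) m))"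
    by (simp only: vdot_commute[of _ "_ - _"])
  also have "\<dots> = (\<Sum>x\<in>E. \<Sum>y\<in>F. if x = y then of_nat CARD('a^'n) else 0)"
    by (intro sum.cong refl) (simp only: goodc_sum_vec[OF g] right_minus_eq)
  also have "\<dots> = (\<Sum>x\<in>E. if x \<in> F then of_nat CARD('a^'n) else 0)"
    by (intro sum.cong refl) (simp add: sum.delta)
  also have "\<dots> = (\<Sum>x\<in>E \<inter> F. of_nat CARD('a^'n))"
    by (simp add: sum.inter_restrict[symmetric] Int_def)
  finally show ?thesis by simp
qed

lemma nu_identity:
  fixes psi :: "'a::{finite,field} \<Rightarrow> complex" and E F :: "('a^'n) set"
  assumes g: "goodc psi" and c: "CHAR('a) > 2" and ev: "even CARD('n)"
  defines "T \<equiv> (\<Sum>w\<in>(UNIV::('a^'n) set). psi (qnorm w))"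
      and "N \<equiv> (of_nat CARD('a^'n) :: complex)"
      and "P \<equiv> (\<lambda>m. \<Sum>x\<in>E. \<Sum>y\<in>F. psi (vdot m (x - y)))"
  shows "of_nat CARD('a) * of_nat (nu0 E F) = of_nat (card E * card F)
           + T / N * (of_nat CARD('a) * (\<Sum>m\<in>S0. P m) - N * of_nat (card (E \<inter> F)))"
proof -
  let ?q = "of_nat CARD('a) :: complex"
  have fin: "finite E" "finite F" by simp_all
  have "?q * of_nat (nu0 E F) = (\<Sum>x\<in>E. \<Sum>y\<in>F. if qnorm (x - y) = 0 then ?q else 0)"
    by (simp add: nu0_sum[OF fin] sum_distrib_left if_distrib cong: if_cong)
  also have "\<dots> = (\<Sum>x\<in>E. \<Sum>y\<in>F. \<Sum>s\<in>UNIV. psi (s * qnorm (x - y)))"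
    by (simp add: goodc_sum_1[OF g])
  also have "\<dots> = (\<Sum>x\<in>E. \<Sum>y\<in>F. 1 + (\<Sum>s\<in>UNIV - {0}. psi (s * qnorm (x - y))))"
    by (intro sum.cong refl) (simp add: sum.remove[of UNIV 0] goodc_0[OF g])
  also have "\<dots> = of_nat (card E * card F) + (\<Sum>s\<in>UNIV - {0}. \<Sum>x\<in>E. \<Sum>y\<in>F. psi (s * qnorm (x - y)))"
    by (simp add: sum.distrib sum.swap[of _ "UNIV - {0}"] sum.swap[of _ "UNIV - {0}" F])
  also have "(\<Sum>s\<in>UNIV - {0}. \<Sum>x\<in>E. \<Sum>y\<in>F. psi (s * qnorm (x - y)))
      = (\<Sum>s\<in>UNIV - {0}. T / N * (\<Sum>m\<in>UNIV. P m * psi (- (qnorm m / (4 * s)))))"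
  proof (intro sum.cong refl)
    fix s :: 'a assume "s \<in> UNIV - {0}"
    hence s: "s \<noteq> 0" by simp
    have "(\<Sum>x\<in>E. \<Sum>y\<in>F. psi (s * qnorm (x - y)))
        = (\<Sum>x\<in>E. \<Sum>y\<in>F. T / N * (\<Sum>m\<in>UNIV. psi (vdot m (x - y)) * psi (- (qnorm m / (4 * s)))))"
      unfolding T_def N_def by (simp only: expand_lemma[OF g c ev s])
    also have "\<dots> = T / N * (\<Sum>x\<in>E. \<Sum>y\<in>F. \<Sum>m\<in>UNIV. psi (vdot m (x - y)) * psi (- (qnorm m / (4 * s))))"
      by (simp add: sum_distrib_left)
    also have "(\<Sum>x\<in>E. \<Sum>y\<in>F. \<Sum>m\<in>UNIV. psi (vdot m (x - y)) * psi (- (qnorm m / (4 * s))))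
       = (\<Sum>m\<in>UNIV. P m * psi (- (qnorm m / (4 * s))))"
      unfolding P_def sum_distrib_right
      by (subst sum.swap, rule sum.cong[OF refl], rule sum.swap)
    finally show "(\<Sum>x\<in>E. \<Sum>y\<in>F. psi (s * qnorm (x - y))) = T / N * (\<Sum>m\<in>UNIV. P m * psi (- (qnorm m / (4 * s))))" .
  qed
  also have "\<dots> = T / N * (\<Sum>m\<in>UNIV. P m * (\<Sum>s\<in>UNIV - {0}. psi (- (qnorm m / (4 * s)))))"
    by (simp add: sum_distrib_left sum.swap[of _ "UNIV - {0}"])
  also have "\<dots> = T / N * (\<Sum>m\<in>UNIV. P m * (if qnorm m = 0 then ?q - 1 else - 1))"
    by (simp add: sum_nonzero_inv[OF g c])
  also have "(\<Sum>m\<in>UNIV. P m * (if qnorm m = 0 then ?q - 1 else - 1))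
      = ?q * (\<Sum>m\<in>S0. P m) - (\<Sum>m\<in>UNIV. P m)"
  proof -
    have "(\<Sum>m\<in>UNIV. P m * (if qnorm m = 0 then ?q - 1 else - 1))
       = (\<Sum>m\<in>UNIV. (if qnorm m = 0 then ?q * P m else 0) - P m)"
      by (intro sum.cong refl) (simp add: algebra_simps)
    also have "\<dots> = ?q * (\<Sum>m\<in>S0. P m) - (\<Sum>m\<in>UNIV. P m)"
      by (simp add: sum_subtractf sum.If_cases S0_def sum_distrib_left)
    finally show ?thesis .
  qed
  also have "(\<Sum>m\<in>UNIV. P m) = N * of_nat (card (E \<inter> F))"
    unfolding P_def N_def by (rule P_sum[OF g])
  finally show ?thesis by simp
qed

lemma T_square:
  fixes psi :: "'a::{finite,field} \<Rightarrow> complex"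
  assumes g: "goodc psi" and c: "CHAR('a) > 2" and ev: "even CARD('n)"
  shows "(\<Sum>w\<in>(UNIV::('a^'n) set). psi (qnorm w))^2 = of_nat CARD('a^'n)"
proof -
  let ?T = "(\<Sum>w\<in>(UNIV::('a^'n) set). psi (qnorm w))"
  have two: "(2::'a) \<noteq> 0" by (rule two_ne_zero_char[OF c])
  have Tm: "(\<Sum>w\<in>(UNIV::('a^'n) set). psi (- qnorm w)) = ?T"
    using qnorm_scale_invariance[OF c ev, of "-1" "psi"] by simp
  have "?T^2 = (\<Sum>y\<in>(UNIV::('a^'n) set). \<Sum>x\<in>(UNIV::('a^'n) set). psi (qnorm x - qnorm y))"
  proof -
    have "?T^2 = ?T * (\<Sum>w\<in>(UNIV::('a^'n) set). psi (- qnorm w))"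
      by (simp add: Tm power2_eq_square)
    also have "\<dots> = (\<Sum>x\<in>(UNIV::('a^'n) set). \<Sum>y\<in>(UNIV::('a^'n) set). psi (qnorm x - qnorm y))"
      by (simp add: sum_product goodc_diff[OF g])
    also have "\<dots> = (\<Sum>y\<in>(UNIV::('a^'n) set). \<Sum>x\<in>(UNIV::('a^'n) set). psi (qnorm x - qnorm y))"
      by (rule sum.swap)
    finally show ?thesis .
  qed
  also have "\<dots> = (\<Sum>y\<in>(UNIV::('a^'n) set). \<Sum>a\<in>(UNIV::('a^'n) set). psi (qnorm (y + a) - qnorm y))"
  proof (rule sum.cong[OF refl])
    fix y :: "'a^'n"
    show "(\<Sum>x\<in>(UNIV::('a^'n) set). psi (qnorm x - qnorm y)) = (\<Sum>a\<in>(UNIV::('a^'n) set). psi (qnorm (y + a) - qnorm y))"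
      by (rule sum.reindex_bij_witness[of _ "\<lambda>x. y + x" "\<lambda>x. x - y"]) auto
  qed
  also have "\<dots> = (\<Sum>y\<in>(UNIV::('a^'n) set). \<Sum>a\<in>(UNIV::('a^'n) set). psi (qnorm a) * psi (vdot (a + a) y))"
  proof (intro sum.cong refl)
    fix y a :: "'a^'n"
    have "vdot (a + a) y = 2 * vdot y a"
      by (simp only: vdot_commute[of "a + a"] vdot_add_right vdot_commute[of a] mult_2)
    hence "qnorm (y + a) - qnorm y = qnorm a + vdot (a + a) y"
      by (simp add: qnorm_add)
    thus "psi (qnorm (y + a) - qnorm y) = psi (qnorm a) * psi (vdot (a + a) y)"
      by (simp add: goodc_add[OF g])
  qed
  also have "\<dots> = (\<Sum>a\<in>(UNIV::('a^'n) set). psi (qnorm a) * (\<Sum>y\<in>UNIV. psi (vdot (a + a) y)))"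
    by (subst sum.swap) (simp add: sum_distrib_left)
  also have "\<dots> = (\<Sum>a\<in>(UNIV::('a^'n) set). if a = 0 then of_nat CARD('a^'n) else 0)"
  proof (intro sum.cong refl)
    fix a :: "'a^'n"
    have "a + a = 0 \<longleftrightarrow> a = 0"
    proof
      assume "a + a = 0"
      hence aa: "(a + a) $ i = 0" for i by simp
      have "a $ i = 0" for i using aa[of i] two by (metis mult_2 mult_eq_0_iff plus_vec_def vec_lambda_beta)
      thus "a = 0" by (simp add: vec_eq_iff)
    qed simp
    thus "psi (qnorm a) * (\<Sum>y\<in>UNIV. psi (vdot (a + a) y)) = (if a = 0 then of_nat CARD('a^'n) else 0)"
      by (simp add: goodc_sum_vec[OF g] goodc_0[OF g] qnorm_def)
  qed
  also have "\<dots> = of_nat CARD('a^'n)" by simp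
  finally show ?thesis .
qed


lemma parseval:
  fixes psi :: "'a::{finite,field} \<Rightarrow> complex" and A :: "('a^'n) set"
  assumes g: "goodc psi"
  shows "(\<Sum>m\<in>UNIV. (cmod (\<Sum>x\<in>A. psi (vdot m x)))^2) = real CARD('a^'n) * real (card A)"
proof -
  have "complex_of_real (\<Sum>m\<in>UNIV. (cmod (\<Sum>x\<in>A. psi (vdot m x)))^2)
      = (\<Sum>m\<in>UNIV. (\<Sum>x\<in>A. psi (vdot m x)) * cnj (\<Sum>x\<in>A. psi (vdot m x)))"
    by (simp only: of_real_sum complex_norm_square)
  also have "\<dots> = (\<Sum>m\<in>UNIV. \<Sum>x\<in>A. \<Sum>y\<in>A. psi (vdot m (x - y)))"
  proof (rule sum.cong[OF refl])
    fix m :: "'a^'n"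
    have "cnj (\<Sum>x\<in>A. psi (vdot m x)) = (\<Sum>y\<in>A. psi (- vdot m y))"
      by (simp add: goodc_cnj[OF g])
    hence "(\<Sum>x\<in>A. psi (vdot m x)) * cnj (\<Sum>x\<in>A. psi (vdot m x))
        = (\<Sum>x\<in>A. \<Sum>y\<in>A. psi (vdot m x) * psi (- vdot m y))"
      by (simp add: sum_product)
    also have "\<dots> = (\<Sum>x\<in>A. \<Sum>y\<in>A. psi (vdot m (x - y)))"
      by (simp add: vdot_diff_right goodc_diff[OF g])
    finally show "(\<Sum>x\<in>A. psi (vdot m x)) * cnj (\<Sum>x\<in>A. psi (vdot m x))
        = (\<Sum>x\<in>A. \<Sum>y\<in>A. psi (vdot m (x - y)))" .
  qed
  also have "\<dots> = of_nat CARD('a^'n) * of_nat (card (A \<inter> A))" by (rule P_sum[OF g])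
  also have "\<dots> = complex_of_real (real CARD('a^'n) * real (card A))" by simp
  finally show ?thesis by (simp only: of_real_eq_iff)
qed

lemma final_arith:
  fixes r nu X q tau I N :: real
  assumes r: "r = nu - X / q + tau * I / q" and rN: "r^2 \<le> N * X" and tN: "tau^2 = N"
    and IX: "I^2 \<le> X" and XN: "16 * N \<le> X" and q: "q \<ge> 3" and nu: "nu \<ge> 0" and N: "N > 0"
  shows "(X - nu)^2 \<ge> X^2 / 36 \<and> r^2 - nu^2 \<le> X^2 / q"
proof -
  have X0: "X \<ge> 0" using XN N by simp
  have NX: "16 * (N * X) \<le> X * X" using mult_right_mono[OF XN X0] by (simp add: algebra_simps)
  have "r^2 \<le> (X/4)^2" using rN NX by (simp add: power2_eq_square)
  hence ra: "\<bar>r\<bar> \<le> X/4" using X0 by (simp add: power2_le_iff_abs_le)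
  have "(tau * I)^2 = N * I^2" using tN by (simp add: power_mult_distrib)
  also have "\<dots> \<le> N * X" using IX N by simp
  also have "\<dots> \<le> (X/4)^2" using NX by (simp add: power2_eq_square)
  finally have ta: "\<bar>tau * I\<bar> \<le> X/4" using X0 by (simp add: power2_le_iff_abs_le)
  define u where "u = 1 / q"
  have u: "0 < u" "u \<le> 1/3" using q by (auto simp: u_def field_simps)
  have r': "r = nu - X * u + (tau * I) * u" using r by (simp add: u_def)
  have tu: "\<bar>(tau * I) * u\<bar> \<le> X / 4 * u" using ta u by (simp add: abs_mult mult_right_mono)
  have Xu: "X * u \<le> X / 3" using mult_left_mono[OF u(2) X0] by simp
  have Xu4: "X / 4 * u \<le> X / 12" using mult_left_mono[OF u(2), of "X/4"] X0 by simp
  have Xu0: "X * u \<ge> 0" using X0 u by simp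
  have ra1: "r \<le> X/4" using ra by (rule abs_le_D1)
  have tu1: "(tau * I) * u \<le> X / 4 * u" using tu by (rule abs_le_D1)
  have tu2: "- ((tau * I) * u) \<le> X / 4 * u" using tu by (rule abs_le_D2)
  have nu_le: "nu \<le> 2 * X / 3"
    using r' ra1 tu2 Xu Xu4 by linarith
  have A: "(X - nu)^2 \<ge> X^2 / 36"
  proof -
    have "X / 6 \<le> X - nu" using nu_le X0 by simp
    hence "(X/6)^2 \<le> (X - nu)^2" using X0 by (intro power_mono) auto
    thus ?thesis by (simp add: power2_eq_square)
  qed
  define c where "c = X * u - (tau * I) * u"
  have c0: "c \<ge> 0" using tu1 Xu0 unfolding c_def by linarith
  have c1: "c \<le> 5 / 4 * X * u" using tu2 unfolding c_def by linarith
  have rc: "r = nu - c" using r' by (simp add: c_def)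
  have "r^2 - nu^2 = c^2 - 2 * nu * c" by (simp add: rc power2_eq_square algebra_simps)
  also have "\<dots> \<le> c^2" using nu c0 by simp
  also have "\<dots> \<le> (5 / 4 * X * u)^2" using c0 c1 by (intro power_mono) auto
  also have "\<dots> = X^2 * u * (25 / 16 * u)" by (simp add: power2_eq_square)
  also have "\<dots> \<le> X^2 * u * 1" using u by (intro mult_left_mono) auto
  also have "\<dots> = X^2 / q" by (simp add: u_def)
  finally show ?thesis using A by simp
qed

lemma real_of_sq:
  fixes z :: complex and r :: real
  assumes "z^2 = of_real r" "r > 0"
  shows "z = of_real (Re z)"
proof -
  have i: "Im (z^2) = 0" and re: "Re (z^2) = r" using assms by simp_all
  have i2: "Im (z^2) = 2 * Re z * Im z" and r2: "Re (z^2) = Re z * Re z - Im z * Im z"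
    by (simp_all add: power2_eq_square)
  have "Re z * Im z = 0" using i i2 by simp
  moreover have "Re z \<noteq> 0"
  proof
    assume "Re z = 0"
    hence "- (Im z * Im z) = r" using re r2 by simp
    moreover have "Im z * Im z \<ge> 0" by simp
    ultimately show False using assms(2) by linarith
  qed
  ultimately have "Im z = 0" by simp
  thus ?thesis by (simp add: complex_eq_iff)
qed

lemma fourier_ind:
  fixes psi :: "'a::{finite,field} \<Rightarrow> complex" and A :: "('a^'n) set"
  shows "fourier psi (ind A) m = (\<Sum>x\<in>A. psi (- vdot m x)) / of_nat CARD('a^'n)"
proof -
  have "(\<Sum>x\<in>UNIV. psi (- vdot m x) * ind A x) = (\<Sum>x\<in>A. psi (- vdot m x))"
    by (simp add: ind_def sum.If_cases if_distrib cong: if_cong)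
  thus ?thesis by (simp add: fourier_def)
qed

lemma four_prod:
  fixes psi :: "'a::{finite,field} \<Rightarrow> complex" and E F :: "('a^'n) set"
  assumes g: "goodc psi"
  shows "cnj (fourier psi (ind E) m) * fourier psi (ind F) m
       = (\<Sum>x\<in>E. psi (vdot m x)) * cnj (\<Sum>y\<in>F. psi (vdot m y)) / (of_nat CARD('a^'n))^2"
proof -
  have "cnj (\<Sum>x\<in>E. psi (- vdot m x)) = (\<Sum>x\<in>E. psi (vdot m x))"
    by (simp add: goodc_cnj[OF g])
  moreover have "cnj (\<Sum>y\<in>F. psi (vdot m y)) = (\<Sum>y\<in>F. psi (- vdot m y))"
    by (simp add: goodc_cnj[OF g])
  ultimately show ?thesis by (simp add: fourier_ind power2_eq_square)
qed

lemma P_factor: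
  fixes psi :: "'a::{finite,field} \<Rightarrow> complex" and E F :: "('a^'n) set"
  assumes g: "goodc psi"
  shows "(\<Sum>x\<in>E. \<Sum>y\<in>F. psi (vdot m (x - y))) = (\<Sum>x\<in>E. psi (vdot m x)) * cnj (\<Sum>y\<in>F. psi (vdot m y))"
proof -
  have "cnj (\<Sum>y\<in>F. psi (vdot m y)) = (\<Sum>y\<in>F. psi (- vdot m y))"
    by (simp add: goodc_cnj[OF g])
  thus ?thesis by (simp add: sum_product vdot_diff_right goodc_diff[OF g])
qed

lemma main_good:
  fixes psi :: "'a::{finite,field} \<Rightarrow> complex"
    and E F :: "('a ^ 'n) set"
  assumes g: "goodc psi" and c: "CHAR('a) > 2"
    and ev: "even CARD('n)"
    and size: "real (card E) * real (card F) \<ge> 16 * real CARD('a) ^ CARD('n)"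
  shows "(real (card E) * real (card F) - real (nu0 E F))^2
           \<ge> (real (card E))^2 * (real (card F))^2 / 36 \<and>
         real CARD('a) ^ (3 * CARD('n)) *
           (cmod (\<Sum>m\<in>S0. cnj (fourier psi (ind E) m) * fourier psi (ind F) m))^2
         - (real (nu0 E F))^2
         \<le> (real (card E))^2 * (real (card F))^2 / real CARD('a)"
proof -
  define N where "N = CARD('a^'n)"
  define q where "q = CARD('a)"
  define T where "T = (\<Sum>w\<in>(UNIV::('a^'n) set). psi (qnorm w))"
  define eE where "eE m = (\<Sum>x\<in>E. psi (vdot m x))" for m :: "'a^'n"
  define eF where "eF m = (\<Sum>x\<in>F. psi (vdot m x))" for m :: "'a^'n"
  define P where "P m = (\<Sum>x\<in>E. \<Sum>y\<in>F. psi (vdot m (x - y)))" for m :: "'a^'n"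
  define SP where "SP = (\<Sum>m\<in>S0. P m)"
  define X where "X = real (card E) * real (card F)"
  define I where "I = real (card (E \<inter> F))"
  define nu where "nu = real (nu0 E F)"
  have NqD: "N = q ^ CARD('n)" by (simp add: N_def q_def)
  have Npos: "N > 0" by (simp add: N_def)
  have "card {0, 1, 2::'a} = 3" using two_ne_zero_char[OF c]
    by (simp add: card_insert_if) (metis one_add_one add_cancel_left_right zero_neq_one)
  hence q3: "q \<ge> 3" unfolding q_def by (metis card_mono finite subset_UNIV)
  have TT: "T^2 = complex_of_real (real N)" using T_square[OF g c ev] by (simp add: T_def N_def)
  define tau where "tau = Re T"
  have Ttau: "T = complex_of_real tau" using real_of_sq[OF TT] Npos by (simp add: tau_def)
  have "complex_of_real (tau^2) = complex_of_real (real N)" using TT by (simp only: Ttau of_real_power)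
  hence tau2: "tau^2 = real N" by (simp only: of_real_eq_iff)
  have id: "of_nat q * of_nat (nu0 E F) = of_nat (card E * card F)
           + T / of_nat N * (of_nat q * SP - of_nat N * of_nat (card (E \<inter> F)))"
    using nu_identity[OF g c ev, of E F] by (simp add: T_def N_def q_def SP_def P_def)
  define R where "R = T * SP / of_nat N"
  have "complex_of_real (real q) * complex_of_real nu = complex_of_real X + of_nat q * R - T * of_real I"
    using id Npos by (simp add: R_def X_def I_def nu_def field_simps)
  hence R_eq: "R = complex_of_real (nu - X / q + tau * I / q)"
    using q3 by (simp add: Ttau field_simps)
  define r where "r = nu - X / q + tau * I / q"
  have cR: "(cmod R)^2 = (cmod SP)^2 / real N"
  proof -
    have "cmod R = \<bar>tau\<bar> * cmod SP / real N" by (simp add: R_def Ttau norm_mult norm_divide)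
    hence "(cmod R)^2 = tau^2 * (cmod SP)^2 / (real N)^2" by (simp add: power_divide power_mult_distrib)
    hence "(cmod R)^2 = real N * (cmod SP)^2 / (real N)^2" by (simp only: tau2)
    thus ?thesis using Npos by (simp add: power2_eq_square)
  qed
  have "cmod R = \<bar>r\<bar>" unfolding R_eq r_def[symmetric] by (rule norm_of_real)
  hence r2: "r^2 = (cmod SP)^2 / real N" using cR by simp
  have SPb: "(cmod SP)^2 \<le> (real N)^2 * X"
  proof -
    have "cmod SP \<le> (\<Sum>m\<in>S0. cmod (P m))" unfolding SP_def by (rule norm_sum)
    also have "\<dots> \<le> (\<Sum>m\<in>UNIV. cmod (P m))" by (intro sum_mono2) auto
    also have "\<dots> = (\<Sum>m\<in>UNIV. cmod (eE m) * cmod (eF m))"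
      by (simp only: P_def P_factor[OF g] eE_def eF_def norm_mult complex_mod_cnj)
    finally have a: "cmod SP \<le> (\<Sum>m\<in>UNIV. cmod (eE m) * cmod (eF m))" .
    have "(cmod SP)^2 \<le> (\<Sum>m\<in>UNIV. cmod (eE m) * cmod (eF m))^2"
      using a by (intro power_mono) auto
    also have "\<dots> \<le> (\<Sum>m\<in>UNIV. (cmod (eE m))^2) * (\<Sum>m\<in>UNIV. (cmod (eF m))^2)"
      by (rule Cauchy_Schwarz_ineq_sum)
    also have "\<dots> = (real N * real (card E)) * (real N * real (card F))"
      unfolding eE_def eF_def N_def by (simp add: parseval[OF g])
    also have "\<dots> = (real N)^2 * X" by (simp add: X_def power2_eq_square)
    finally show ?thesis .
  qed
  have rN: "r^2 \<le> real N * X"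
  proof -
    have "r^2 = (cmod SP)^2 / real N" by (rule r2)
    also have "\<dots> \<le> (real N)^2 * X / real N" using SPb Npos by (intro divide_right_mono) auto
    also have "\<dots> = real N * X" using Npos by (simp add: power2_eq_square)
    finally show ?thesis .
  qed
  have IX: "I^2 \<le> X"
  proof -
    have "card (E \<inter> F) \<le> card E" "card (E \<inter> F) \<le> card F" by (auto intro: card_mono)
    hence "I * I \<le> real (card E) * real (card F)" unfolding I_def by (intro mult_mono) auto
    thus ?thesis by (simp add: X_def power2_eq_square)
  qed
  have XN: "16 * real N \<le> X" using size by (simp add: X_def NqD q_def)
  have fa: "(X - nu)^2 \<ge> X^2 / 36 \<and> r^2 - nu^2 \<le> X^2 / real q"
    by (rule final_arith[OF r_def rN tau2 IX XN]) (use q3 Npos in \<open>auto simp: nu_def\<close>)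
  have stmt: "(\<Sum>m\<in>S0. cnj (fourier psi (ind E) m) * fourier psi (ind F) m) = SP / (of_nat N)^2"
    by (simp add: four_prod[OF g] SP_def P_def P_factor[OF g] N_def sum_divide_distrib)
  have "real CARD('a) ^ (3 * CARD('n)) *
           (cmod (\<Sum>m\<in>S0. cnj (fourier psi (ind E) m) * fourier psi (ind F) m))^2 = r^2"
  proof -
    have "real CARD('a) ^ (3 * CARD('n)) = (real N)^3"
      by (simp add: NqD q_def power_mult mult.commute[of 3])
    moreover have "(cmod (SP / (of_nat N)^2))^2 = (cmod SP)^2 / (real N)^4"
      by (simp add: norm_divide power_divide norm_power flip: power_mult)
    ultimately have "real CARD('a) ^ (3 * CARD('n)) * (cmod (SP / (of_nat N)^2))^2
        = (real N)^3 * ((cmod SP)^2 / (real N)^4)" by simp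
    also have "\<dots> = (cmod SP)^2 / real N" using Npos by (simp add: field_simps power_def)
    finally show ?thesis unfolding stmt r2 .
  qed
  moreover have "X^2 = (real (card E))^2 * (real (card F))^2" by (simp add: X_def power_mult_distrib)
  ultimately show ?thesis using fa by (simp add: X_def nu_def q_def)
qed

definition sg :: "'a::field set \<Rightarrow> bool" where
  "sg H \<longleftrightarrow> 0 \<in> H \<and> (\<forall>x\<in>H. \<forall>y\<in>H. x + y \<in> H)"

lemma char_inv:
  assumes "prime CHAR('a::field)" "\<not> CHAR('a) dvd k"
  shows "\<exists>j. of_nat (k * j) = (1::'a)"
proof -
  have k0: "k \<noteq> 0" using assms(2) by (metis dvd_0_right)
  have "coprime CHAR('a) k" using assms by (simp add: prime_imp_coprime)
  hence g1: "gcd k CHAR('a) = 1" by (simp add: coprime_iff_gcd_eq_1 gcd.commute)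
  obtain x y where "k * x = CHAR('a) * y + gcd k CHAR('a)" using bezout_nat[OF k0] by blast
  hence "of_nat (k * x) = (of_nat (CHAR('a) * y + 1) :: 'a)" using g1 by simp
  also have "\<dots> = 1" by simp
  finally show ?thesis by blast
qed

lemma sg_mult: "sg H \<Longrightarrow> x \<in> H \<Longrightarrow> of_nat n * x \<in> H"
  by (induction n) (auto simp: sg_def distrib_right)

lemma sg_neg:
  assumes "sg H" "x \<in> (H :: 'a::{finite,field} set)"
  shows "- x \<in> H"
proof -
  have p: "CHAR('a) > 0" by (rule finite_imp_CHAR_pos) simp
  have "of_nat (CHAR('a) - 1) * x + x = of_nat CHAR('a) * x"
    using p by (simp add: of_nat_diff algebra_simps)
  also have "\<dots> = 0" by simp
  finally have "- x = of_nat (CHAR('a) - 1) * x" by (metis add.commute neg_eq_iff_add_eq_0)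
  thus ?thesis using sg_mult[OF assms] by simp
qed

lemma sg_diff: "sg H \<Longrightarrow> x \<in> H \<Longrightarrow> y \<in> H \<Longrightarrow> x - (y::'a::{finite,field}) \<in> H"
  using sg_neg[of H y] unfolding sg_def by (metis diff_conv_add_uminus)

lemma exists_goodc: "\<exists>psi :: 'a::{finite,field} \<Rightarrow> complex. goodc psi"
proof -
  define p where "p = CHAR('a)"
  have p0: "p > 0" unfolding p_def by (rule finite_imp_CHAR_pos) simp
  have pp: "prime p" unfolding p_def using p0 by (intro prime_CHAR_semidom) (simp add: p_def)
  have p1: "p > 1" using prime_gt_1_nat[OF pp] by simp
  have ofp: "of_nat p = (0::'a)" by (simp add: p_def)
  define C where "C = {H :: 'a set. sg H \<and> 1 \<notin> H}"
  have finC: "finite C" by simp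
  have C0: "{0} \<in> C" by (simp add: C_def sg_def)
  define mx where "mx = Max (card ` C)"
  obtain H where HC: "H \<in> C" and Hmx: "card H = mx"
    unfolding mx_def using Max_in[of "card ` C"] finC C0 by fastforce
  have Hmax: "card H' \<le> card H" if "H' \<in> C" for H'
    unfolding Hmx mx_def using finC that by simp
  have sgH: "sg H" and H1: "1 \<notin> H" using HC by (auto simp: C_def)
  have H0: "0 \<in> H" using sgH by (simp add: sg_def)
  have Hadd: "x \<in> H \<Longrightarrow> y \<in> H \<Longrightarrow> x + y \<in> H" for x y using sgH by (simp add: sg_def)
  have nat_notin: "of_nat d \<notin> H" if "0 < d" "d < p" for d
  proof
    assume d: "of_nat d \<in> H"
    have "\<not> p dvd d" using that by (auto dest: dvd_imp_le)
    then obtain j where "of_nat (d * j) = (1::'a)" using char_inv[of d] pp by (auto simp: p_def)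
    hence "of_nat j * of_nat d = (1::'a)" by (simp add: mult.commute)
    moreover have "of_nat j * of_nat d \<in> H" using sg_mult[OF sgH d] .
    ultimately show False using H1 by simp
  qed
  have ex: "\<exists>j<p. x - of_nat j \<in> H" for x
  proof (cases "x \<in> H")
    case True thus ?thesis using p0 by (intro exI[of _ 0]) auto
  next
    case False
    define H' where "H' = {h + of_nat k * x | h k. h \<in> H}"
    have sgH': "sg H'" unfolding sg_def H'_def
    proof (intro conjI ballI)
      show "0 \<in> {h + of_nat k * x | h k. h \<in> H}" using H0 by (intro CollectI exI[of _ 0]) auto
      fix a b assume "a \<in> {h + of_nat k * x | h k. h \<in> H}" "b \<in> {h + of_nat k * x | h k. h \<in> H}"
      then obtain h1 k1 h2 k2 where "a = h1 + of_nat k1 * x" "h1 \<in> H" "b = h2 + of_nat k2 * x" "h2 \<in> H"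
        by auto
      thus "a + b \<in> {h + of_nat k * x | h k. h \<in> H}"
        by (intro CollectI exI[of _ "h1 + h2"] exI[of _ "k1 + k2"]) (auto simp: Hadd algebra_simps)
    qed
    have sub: "H \<subset> H'"
    proof
      show "H \<subseteq> H'" unfolding H'_def by (force intro: exI[of _ 0])
      have "x \<in> H'" unfolding H'_def using H0 by (intro CollectI exI[of _ 0] exI[of _ 1]) auto
      thus "H \<noteq> H'" using False by auto
    qed
    have "card H < card H'" by (rule psubset_card_mono) (use sub in auto)
    hence "H' \<notin> C" using Hmax by force
    hence "1 \<in> H'" using sgH' by (auto simp: C_def)
    then obtain h k where hk: "1 = h + of_nat k * x" "h \<in> H" unfolding H'_def by auto
    have "\<not> p dvd k"
    proof
      assume "p dvd k"
      hence "of_nat k = (0::'a)" by (simp add: p_def of_nat_eq_0_iff_char_dvd)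
      thus False using hk H1 by simp
    qed
    then obtain j where j: "of_nat (k * j) = (1::'a)" using char_inv[of k] pp by (auto simp: p_def)
    have "of_nat j = of_nat j * (h + of_nat k * x)" using hk(1) by simp
    also have "\<dots> = of_nat j * h + of_nat (k * j) * x" by (simp add: algebra_simps)
    finally have "of_nat j = of_nat j * h + of_nat (k * j) * x" .
    hence "x - of_nat j = - (of_nat j * h)" using j by (simp add: algebra_simps)
    hence xj: "x - of_nat j \<in> H" using sg_neg[OF sgH sg_mult[OF sgH hk(2)]] by simp
    have "of_nat j = (of_nat (j mod p) :: 'a)"
    proof -
      have "(of_nat j :: 'a) = of_nat (j mod p) + of_nat p * of_nat (j div p)"
        by (metis mod_mult_div_eq of_nat_add of_nat_mult)
      thus ?thesis using ofp by simp
    qed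
    thus ?thesis using xj p0 by (intro exI[of _ "j mod p"]) auto
  qed
  have uniq: "j1 = j2" if "j1 < p" "j2 < p" "x - of_nat j1 \<in> H" "x - of_nat j2 \<in> H" for x j1 j2
  proof -
    have gen: "False" if "a < b" "b < p" "x - of_nat a \<in> H" "x - of_nat b \<in> H" for a b
    proof -
      have "(x - of_nat a) - (x - of_nat b) \<in> H" by (rule sg_diff[OF sgH that(3,4)])
      hence "of_nat (b - a) \<in> H" using that(1) by (simp add: of_nat_diff)
      moreover have "of_nat (b - a) \<notin> H" by (rule nat_notin) (use that in auto)
      ultimately show False by contradiction
    qed
    show ?thesis using gen[of j1 j2] gen[of j2 j1] that by (cases "j1 < j2"; cases "j2 < j1") auto
  qed
  define phi where "phi x = (THE j. j < p \<and> x - of_nat j \<in> H)" for x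
  have phi_eq: "phi x = j" if "j < p" "x - of_nat j \<in> H" for x j
    unfolding phi_def
  proof (rule the_equality)
    show "j < p \<and> x - of_nat j \<in> H" using that by simp
    fix j' assume "j' < p \<and> x - of_nat j' \<in> H"
    thus "j' = j" using uniq[of j' j x] that by simp
  qed
  have phi: "phi x < p \<and> x - of_nat (phi x) \<in> H" for x
  proof -
    obtain j where "j < p" "x - of_nat j \<in> H" using ex[of x] by blast
    thus ?thesis using phi_eq by simp
  qed
  define w :: complex where "w = exp (2 * of_real pi * \<i> / of_nat p)"
  have wp: "w ^ p = 1"
  proof -
    have "w ^ p = exp (of_nat p * (2 * of_real pi * \<i> / of_nat p))"
      unfolding w_def by (rule exp_of_nat_mult[symmetric])
    also have "of_nat p * (2 * of_real pi * \<i> / of_nat p) = 2 * of_real pi * \<i>" using p0 by simp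
    finally have "w ^ p = exp (2 * of_real pi * \<i>)" .
    thus ?thesis by simp
  qed
  have w1: "w \<noteq> 1"
  proof
    assume "w = 1"
    then obtain n :: int where n: "2 * pi / real p = of_int (2 * n) * pi"
      by (auto simp: w_def exp_eq_1)
    hence "(2 * pi) * (1 / real p) = (2 * pi) * of_int n" by (simp add: algebra_simps)
    hence "1 / real p = of_int n" using pi_gt_zero by (simp only: mult_cancel_left) simp
    moreover have "0 < 1 / real p" "1 / real p < 1" using p1 by auto
    ultimately have "0 < n" "n < 1" by simp_all
    thus False by simp
  qed
  define psi where "psi x = w ^ phi x" for x
  have "goodc psi" unfolding goodc_def
  proof (intro conjI allI exI)
    fix x y
    have "phi (x + y) = (phi x + phi y) mod p"
    proof (rule phi_eq)
      show "(phi x + phi y) mod p < p" using p0 by simp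
      have "(of_nat (phi x + phi y) :: 'a) = of_nat ((phi x + phi y) mod p) + of_nat p * of_nat ((phi x + phi y) div p)"
        by (metis mod_mult_div_eq of_nat_add of_nat_mult)
      hence e: "(of_nat ((phi x + phi y) mod p) :: 'a) = of_nat (phi x) + of_nat (phi y)" using ofp by simp
      have "(x - of_nat (phi x)) + (y - of_nat (phi y)) \<in> H" using phi Hadd by blast
      thus "x + y - of_nat ((phi x + phi y) mod p) \<in> H" unfolding e by (simp add: algebra_simps)
    qed
    moreover have "w ^ (m mod p) = w ^ m" for m
    proof -
      have "w ^ m = w ^ (m mod p + p * (m div p))" by (simp only: mod_mult_div_eq)
      also have "\<dots> = w ^ (m mod p) * (w ^ p) ^ (m div p)" by (simp only: power_add power_mult)
      also have "\<dots> = w ^ (m mod p)" by (simp only: wp power_one mult_1_right)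
      finally show ?thesis by (rule sym)
    qed
    ultimately show "psi (x + y) = psi x * psi y" by (simp add: psi_def power_add)
  next
    show "psi 0 = 1" using phi_eq[of 0 0] p0 H0 by (simp add: psi_def)
  next
    have "phi 1 = 1" using phi_eq[of 1 1] p1 H0 by simp
    thus "psi 1 \<noteq> 1" using w1 by (simp add: psi_def)
  qed
  thus ?thesis by blast
qed

theorem mainTheorem10:
  fixes psi :: "'a::{finite,field} \<Rightarrow> complex"
    and E F :: "('a ^ 'n) set"
  assumes char: "CHAR('a) > 2"
    and chi: "nontriv_add_char psi"
    and d_even: "even CARD('n)" and d_ge: "CARD('n) \<ge> 2"
    and size: "real (card E) * real (card F) \<ge> 16 * real CARD('a) ^ CARD('n)"
  shows "(real (card E) * real (card F) - real (nu0 E F))^2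
           \<ge> (real (card E))^2 * (real (card F))^2 / 36 \<and>
         real CARD('a) ^ (3 * CARD('n)) *
           (cmod (\<Sum>m\<in>S0. cnj (fourier psi (ind E) m) * fourier psi (ind F) m))^2
         - (real (nu0 E F))^2
         \<le> (real (card E))^2 * (real (card F))^2 / real CARD('a)"
proof (cases "psi 0 = 1")
  case True
  hence "goodc psi" using chi by (simp add: goodc_def nontriv_add_char_def)
  thus ?thesis by (rule main_good[OF _ char d_even size])
next
  case False
  have hom: "psi (x + y) = psi x * psi y" for x y using chi by (simp add: nontriv_add_char_def)
  have "psi 0 = psi 0 * psi 0" using hom[of 0 0] by simp
  hence p0: "psi 0 = 0" using False by (metis mult_cancel_left1)
  have z: "psi x = 0" for x using hom[of x 0] p0 by simp
  obtain psi' :: "'a \<Rightarrow> complex" where g': "goodc psi'" using exists_goodc by blast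
  have A: "(real (card E) * real (card F) - real (nu0 E F))^2
           \<ge> (real (card E))^2 * (real (card F))^2 / 36"
    using main_good[OF g' char d_even size] by blast
  have "fourier psi (f :: 'a^'n \<Rightarrow> complex) m = 0" for f m by (simp add: fourier_def z)
  hence S: "(\<Sum>m\<in>S0. cnj (fourier psi (ind E) m) * fourier psi (ind F) m) = 0" by simp
  have R0: "0 \<le> (real (card E))^2 * (real (card F))^2 / real CARD('a)" by simp
  have L0: "real CARD('a) ^ (3 * CARD('n)) *
           (cmod (\<Sum>m\<in>S0. cnj (fourier psi (ind E) m) * fourier psi (ind F) m))^2 = 0"
    unfolding S by simp
  have B: "real CARD('a) ^ (3 * CARD('n)) *
           (cmod (\<Sum>m\<in>S0. cnj (fourier psi (ind E) m) * fourier psi (ind F) m))^2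
         - (real (nu0 E F))^2
         \<le> (real (card E))^2 * (real (card F))^2 / real CARD('a)" using L0 R0 zero_le_power2[of "real (nu0 E F)"] by linarith
  show ?thesis using A B by blast
qed

end
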